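(* Let $\vec a\in\mathbb R^n_{>0}$ have rationally independent components, and suppose $\vec v\in\mathbb Z^n\setminus\mathbb Z^n_{\le0}$ satisfies $\mathfrak o^{\vec a}_{\vec v}=\mathfrak o^{\vec a}_k$ for some $k\in\mathbb Z_{\ge1}$. Then each component of $\vec v$ is at most the corresponding component of $\Gamma^{\vec a}_k$.
   Context: The Reeb orbits of $\partial E(\vec a)$ ($E(\vec a)=\{\pi\sum|z_j|^2/a_j\le1\}$, contact form $\lambda_{std}|$) are the iterates $\nu_j^m$ of the simple orbits $\nu_j$ on the coordinate axes, with action $ma_j$; $\mathfrak o^{\vec a}_k$ is the orbit of $k$-th smallest action. For $\vec v\in\mathbb Z^n\setminus\mathbb Z^n_{\le0}$, $\mathfrak o^{\vec a}_{\vec v}:=\nu_{i_M}^{v_{i_M}}$ with $i_M$ the index maximizing $a_iv_i$. $\Gamma^{\vec a}_k\in\mathbb Z^n_{\ge0}$ is the unique tuple $(w_1,\dots,w_n)$ with $\sum w_i=k$ minimizing $\max_i a_iw_i$. *)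

theory Defs
  imports Complex_Main
begin

text \<open>Vectors in R^n / Z^n are modelled as functions on indices 0..n-1 (i < n).
  A Reeb orbit nu_j^m of the ellipsoid boundary is represented by the pair (j, m)
  with j < n and m >= 1; its action is m * a_j.\<close>

definition rat_indep :: "nat \<Rightarrow> (nat \<Rightarrow> real) \<Rightarrow> bool" where
  "rat_indep n a \<longleftrightarrow>
     (\<forall>q :: nat \<Rightarrow> rat. (\<Sum>i<n. of_rat (q i) * a i) = 0 \<longrightarrow> (\<forall>i<n. q i = 0))"

definition orbits :: "nat \<Rightarrow> (nat \<times> nat) set" where
  "orbits n = {(j, m). j < n \<and> m \<ge> 1}"

definition action :: "(nat \<Rightarrow> real) \<Rightarrow> nat \<times> nat \<Rightarrow> real" where
  "action a p = real (snd p) * a (fst p)"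

definition orbit_k :: "nat \<Rightarrow> (nat \<Rightarrow> real) \<Rightarrow> nat \<Rightarrow> nat \<times> nat" where
  "orbit_k n a k = (THE p. p \<in> orbits n \<and>
      card {p' \<in> orbits n. action a p' < action a p} = k - 1)"

definition idx_max :: "nat \<Rightarrow> (nat \<Rightarrow> real) \<Rightarrow> (nat \<Rightarrow> int) \<Rightarrow> nat" where
  "idx_max n a v = (THE i. i < n \<and> (\<forall>j<n. a j * of_int (v j) \<le> a i * of_int (v i)))"

definition orbit_v :: "nat \<Rightarrow> (nat \<Rightarrow> real) \<Rightarrow> (nat \<Rightarrow> int) \<Rightarrow> nat \<times> nat" where
  "orbit_v n a v = (idx_max n a v, nat (v (idx_max n a v)))"

definition tuples :: "nat \<Rightarrow> nat \<Rightarrow> (nat \<Rightarrow> nat) set" where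
  "tuples n k = {w. (\<forall>i\<ge>n. w i = 0) \<and> (\<Sum>i<n. w i) = k}"

definition maxval :: "nat \<Rightarrow> (nat \<Rightarrow> real) \<Rightarrow> (nat \<Rightarrow> nat) \<Rightarrow> real" where
  "maxval n a w = Max ((\<lambda>i. a i * real (w i)) ` {..<n})"

definition Gamma :: "nat \<Rightarrow> (nat \<Rightarrow> real) \<Rightarrow> nat \<Rightarrow> (nat \<Rightarrow> nat)" where
  "Gamma n a k = (THE w. w \<in> tuples n k \<and>
      (\<forall>w' \<in> tuples n k. maxval n a w \<le> maxval n a w'))"

end

theory Submission
  imports Defs
begin

lemma indep2:
  fixes x y :: int
  assumes "rat_indep n a" "i < n" "j < n" "i \<noteq> j" "of_int x * a i = of_int y * a j"
  shows "x = 0 \<and> y = 0"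
proof -
  define q :: "nat \<Rightarrow> rat" where "q = (\<lambda>l. (if l = i then of_int x else 0) + (if l = j then - of_int y else 0))"
  have "(\<Sum>l<n. of_rat (q l) * a l) = (\<Sum>l<n. (if l = i then of_int x * a i else 0) + (if l = j then - (of_int y * a j) else 0))"
    by (rule sum.cong) (auto simp: q_def of_rat_add of_rat_minus distrib_right)
  also have "\<dots> = of_int x * a i - of_int y * a j"
    using assms(2,3) by (simp add: sum.distrib)
  also have "\<dots> = 0" using assms(5) by simp
  finally have "\<forall>l<n. q l = 0" using assms(1) unfolding rat_indep_def by blast
  then have "q i = 0" "q j = 0" using assms(2,3) by auto
  then show ?thesis using assms(4) by (auto simp: q_def)
qed

lemma action_inj:
  assumes "rat_indep n a" "\<forall>i<n. a i > 0" "p \<in> orbits n" "p' \<in> orbits n" "action a p = action a p'"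
  shows "p = p'"
proof -
  obtain j m j' m' where p: "p = (j, m)" and p': "p' = (j', m')" by (cases p, cases p')
  have h: "j < n" "m \<ge> 1" "j' < n" "m' \<ge> 1" using assms(3,4) p p' by (auto simp: orbits_def)
  have e: "real m * a j = real m' * a j'" using assms(5) p p' by (simp add: action_def)
  show ?thesis
  proof (cases "j = j'")
    case True
    then have "a j > 0" using h assms(2) by auto
    then show ?thesis using e True p p' by simp
  next
    case False
    have "of_int (int m) * a j = of_int (int m') * a j'" using e by simp
    from indep2[OF assms(1) h(1) h(3) False this] h show ?thesis by simp
  qed
qed

lemma fin_below:
  assumes "\<forall>i<n. a i > 0"
  shows "finite {p \<in> orbits n. action a p \<le> T}"
proof -
  have "{p \<in> orbits n. action a p \<le> T} \<subseteq> (\<Union>j<n. {j} \<times> {..nat \<lceil>T / a j\<rceil>})"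
  proof
    fix p assume "p \<in> {p \<in> orbits n. action a p \<le> T}"
    then obtain j m where p: "p = (j,m)" "j < n" "real m * a j \<le> T"
      by (auto simp: orbits_def action_def)
    have "a j > 0" using assms p by auto
    then have "real m \<le> T / a j" using p by (simp add: field_simps)
    then have "m \<le> nat \<lceil>T / a j\<rceil>" by linarith
    then show "p \<in> (\<Union>j<n. {j} \<times> {..nat \<lceil>T / a j\<rceil>})" using p by auto
  qed
  then show ?thesis by (rule finite_subset) auto
qed

lemma fin_less:
  assumes "\<forall>i<n. a i > 0"
  shows "finite {p \<in> orbits n. action a p < T}"
  by (rule finite_subset[OF _ fin_below[OF assms, of T]]) auto

lemma orbit_exists:
  assumes "n \<ge> 1" "\<forall>i<n. a i > 0" "rat_indep n a"
  shows "\<exists>p. p \<in> orbits n \<and> card {p' \<in> orbits n. action a p' < action a p} = k"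
proof (induction k)
  case 0
  have "finite (a ` {..<n})" "a ` {..<n} \<noteq> {}" using assms(1) by (auto simp: lessThan_empty_iff)
  then obtain j where j: "j < n" "a j = Min (a ` {..<n})" using Min_in by (metis imageE lessThan_iff)
  have "{p' \<in> orbits n. action a p' < action a (j,1)} = {}"
  proof (rule ccontr)
    assume "\<not> ?thesis"
    then obtain j' m' where "j' < n" "m' \<ge> 1" "real m' * a j' < a j"
      by (auto simp: orbits_def action_def)
    moreover have "a j \<le> a j'" using j \<open>j' < n\<close> by simp
    moreover have "a j' > 0" using assms(2) \<open>j' < n\<close> by auto
    moreover have "a j' \<le> real m' * a j'" using \<open>m' \<ge> 1\<close> \<open>a j' > 0\<close> by simp
    ultimately show False by linarith
  qed
  then have "card {p' \<in> orbits n. action a p' < action a (j,1)} = 0" by (simp only: card.empty)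
  moreover have "(j,1) \<in> orbits n" using j by (simp add: orbits_def)
  ultimately show ?case by blast
next
  case (Suc k)
  then obtain p where p: "p \<in> orbits n" "card {p' \<in> orbits n. action a p' < action a p} = k" by blast
  obtain j m where pj: "p = (j,m)" by (cases p)
  define p2 where "p2 = (j, Suc m)"
  have p2o: "p2 \<in> orbits n" using p pj by (auto simp: orbits_def p2_def)
  have aj: "a j > 0" using p pj assms(2) by (auto simp: orbits_def)
  have lt2: "action a p < action a p2" using aj by (simp add: pj p2_def action_def)
  define S where "S = {q \<in> orbits n. action a p < action a q \<and> action a q \<le> action a p2}"
  have Sfin: "finite S" unfolding S_def
    by (rule finite_subset[OF _ fin_below[OF assms(2), of "action a p2"]]) auto
  have "p2 \<in> S" using p2o lt2 by (simp add: S_def)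
  then have ne: "action a ` S \<noteq> {}" by auto
  obtain q where q: "q \<in> S" "action a q = Min (action a ` S)"
    using Min_in[OF finite_imageI[OF Sfin] ne] by auto
  have qmin: "\<And>q'. q' \<in> S \<Longrightarrow> action a q \<le> action a q'" using q Sfin by simp
  have eq: "{p' \<in> orbits n. action a p' < action a q} = insert p {p' \<in> orbits n. action a p' < action a p}"
  proof (rule set_eqI, rule iffI)
    fix p' assume h: "p' \<in> {p' \<in> orbits n. action a p' < action a q}"
    have "action a q \<le> action a p2" using q by (simp add: S_def)
    show "p' \<in> insert p {p' \<in> orbits n. action a p' < action a p}"
    proof (cases "action a p' \<le> action a p")
      case True
      show ?thesis
      proof (cases "action a p' = action a p")
        case True then have "p' = p" using action_inj[OF assms(3,2)] h p by auto
        then show ?thesis by simp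
      next
        case False then show ?thesis using h \<open>action a p' \<le> action a p\<close> by auto
      qed
    next
      case False
      then have "p' \<in> S" using h \<open>action a q \<le> action a p2\<close> by (auto simp: S_def)
      then have "action a q \<le> action a p'" by (rule qmin)
      then show ?thesis using h by simp
    qed
  next
    fix p' assume "p' \<in> insert p {p' \<in> orbits n. action a p' < action a p}"
    moreover have "action a p < action a q" using q by (simp add: S_def)
    ultimately show "p' \<in> {p' \<in> orbits n. action a p' < action a q}" using p by auto
  qed
  have "card {p' \<in> orbits n. action a p' < action a q} = Suc k"
    unfolding eq using p fin_less[OF assms(2)] by (simp add: card_insert_if)
  moreover have "q \<in> orbits n" using q by (simp add: S_def)
  ultimately show ?case by blast
qed

lemma card_mono_action:
  assumes "\<forall>i<n. a i > 0" "p \<in> orbits n" "action a p < action a q"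
  shows "card {p' \<in> orbits n. action a p' < action a p} < card {p' \<in> orbits n. action a p' < action a q}"
  by (rule psubset_card_mono[OF fin_less[OF assms(1)]]) (use assms in auto)

lemma orbit_k_prop:
  assumes "n \<ge> 1" "\<forall>i<n. a i > 0" "rat_indep n a" "k \<ge> 1"
  shows "orbit_k n a k \<in> orbits n \<and> card {p' \<in> orbits n. action a p' < action a (orbit_k n a k)} = k - 1"
proof -
  have "\<exists>!p. p \<in> orbits n \<and> card {p' \<in> orbits n. action a p' < action a p} = k - 1"
  proof (rule ex_ex1I)
    show "\<exists>p. p \<in> orbits n \<and> card {p' \<in> orbits n. action a p' < action a p} = k - 1"
      by (rule orbit_exists[OF assms(1-3)])
  next
    fix p q assume h: "p \<in> orbits n \<and> card {p' \<in> orbits n. action a p' < action a p} = k - 1"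
      "q \<in> orbits n \<and> card {p' \<in> orbits n. action a p' < action a q} = k - 1"
    show "p = q"
    proof (rule ccontr)
      assume "p \<noteq> q"
      then have "action a p \<noteq> action a q" using action_inj[OF assms(3,2)] h by blast
      then have "action a p < action a q \<or> action a q < action a p" by linarith
      then show False using card_mono_action[OF assms(2)] h by fastforce
    qed
  qed
  then show ?thesis unfolding orbit_k_def by (rule theI')
qed

lemma le_card_aux: "finite S \<Longrightarrow> {1..x::nat} \<subseteq> S \<Longrightarrow> x \<le> card S"
  using card_mono[of S "{1..x}"] by simp

theorem mainTheorem13:
  fixes n :: nat and a :: "nat \<Rightarrow> real" and v :: "nat \<Rightarrow> int" and k :: nat
  assumes "n \<ge> 1"
    and "\<forall>i<n. a i > 0"
    and "rat_indep n a"
    and "\<exists>i<n. v i > 0"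
    and "k \<ge> 1"
    and "orbit_v n a v = orbit_k n a k"
  shows "\<forall>i<n. v i \<le> int (Gamma n a k i)"
proof -
  note apos = assms(2)
  obtain i0 where i0: "i0 < n" "v i0 > 0" using assms(4) by blast
  have fin: "finite ((\<lambda>i. a i * of_int (v i)) ` {..<n})" by simp
  have ne: "(\<lambda>i. a i * of_int (v i)) ` {..<n} \<noteq> {}" using i0 by auto
  obtain iM where iM: "iM < n" "a iM * of_int (v iM) = Max ((\<lambda>i. a i * of_int (v i)) ` {..<n})"
    using Max_in[OF fin ne] by auto
  have iMmax: "\<forall>j<n. a j * of_int (v j) \<le> a iM * of_int (v iM)"
    using iM(2) fin by simp
  define M where "M = a iM * of_int (v iM)"
  have "a i0 * of_int (v i0) > 0" using i0 apos by simp
  moreover have "a i0 * of_int (v i0) \<le> M" using iMmax i0 unfolding M_def by blast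
  ultimately have Mpos: "M > 0" by linarith
  have aiM: "a iM > 0" using apos iM by simp
  have viM: "v iM > 0" using Mpos aiM unfolding M_def by (simp add: zero_less_mult_iff)
  have strict: "\<And>j x. j < n \<Longrightarrow> j \<noteq> iM \<Longrightarrow> a j * of_int x \<noteq> M"
  proof
    fix j x assume h: "j < n" "j \<noteq> iM" "a j * of_int x = M"
    have "of_int x * a j = of_int (v iM) * a iM" using h(3) unfolding M_def by (simp add: mult.commute)
    from indep2[OF assms(3) h(1) iM(1) h(2) this] viM show False by simp
  qed
  have idx: "idx_max n a v = iM"
    unfolding idx_max_def
  proof (rule the_equality)
    show "iM < n \<and> (\<forall>j<n. a j * of_int (v j) \<le> a iM * of_int (v iM))" using iM iMmax by simp
  next
    fix i assume h: "i < n \<and> (\<forall>j<n. a j * of_int (v j) \<le> a i * of_int (v i))"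
    have "a i * of_int (v i) \<le> a iM * of_int (v iM)" using iMmax h by blast
    moreover have "a iM * of_int (v iM) \<le> a i * of_int (v i)" using h iM by blast
    ultimately have "a i * of_int (v i) = M" unfolding M_def by linarith
    then show "i = iM" using strict h by blast
  qed
  have ov: "orbit_v n a v = (iM, nat (v iM))" by (simp add: orbit_v_def idx)
  have actM: "action a (iM, nat (v iM)) = M" using viM by (simp add: action_def M_def mult.commute)
  have ok: "card {p' \<in> orbits n. action a p' < M} = k - 1"
    using orbit_k_prop[OF assms(1,2,3,5)] assms(6) ov actM by simp
  define S where "S = (\<lambda>j. {m::nat. 1 \<le> m \<and> real m * a j < M})"
  have Sfin: "finite (S j)" if "j < n" for j
  proof -
    have "finite {p \<in> orbits n. action a p \<le> M}" by (rule fin_below[OF apos])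
    then have "finite (snd ` ({p \<in> orbits n. action a p \<le> M} \<inter> {j} \<times> UNIV))"
      by (intro finite_imageI finite_Int disjI1)
    moreover have "S j \<subseteq> snd ` ({p \<in> orbits n. action a p \<le> M} \<inter> {j} \<times> UNIV)"
    proof
      fix m assume "m \<in> S j"
      then have jm: "(j,m) \<in> {p \<in> orbits n. action a p \<le> M} \<inter> {j} \<times> UNIV"
        using that by (auto simp: S_def orbits_def action_def)
      show "m \<in> snd ` ({p \<in> orbits n. action a p \<le> M} \<inter> {j} \<times> UNIV)"
        by (rule image_eqI[OF _ jm]) simp
    qed
    ultimately show ?thesis by (rule finite_subset[rotated])
  qed
  have seteq: "{p' \<in> orbits n. action a p' < M} = Sigma {..<n} S"
  proof (rule set_eqI)
    fix p :: "nat \<times> nat"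
    obtain j m where p: "p = (j, m)" by (cases p)
    show "p \<in> {p' \<in> orbits n. action a p' < M} \<longleftrightarrow> p \<in> Sigma {..<n} S"
      unfolding p by (simp add: S_def orbits_def action_def)
  qed
  have sumS: "(\<Sum>j<n. card (S j)) = k - 1"
    using ok unfolding seteq using Sfin by (simp add: card_SigmaI)
  have SiM: "S iM = {1..<nat (v iM)}"
  proof -
    have "\<And>m::nat. real m * a iM < M \<longleftrightarrow> int m < v iM"
    proof -
      fix m :: nat
      have "real m * a iM < M \<longleftrightarrow> real m < of_int (v iM)" using aiM unfolding M_def by (simp add: mult.commute)
      also have "\<dots> \<longleftrightarrow> int m < v iM" by (metis of_int_less_iff of_int_of_nat_eq)
      finally show "real m * a iM < M \<longleftrightarrow> int m < v iM" .
    qed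
    note h = this
    show ?thesis
    proof (rule set_eqI)
      fix m :: nat
      have "m \<in> S iM \<longleftrightarrow> 1 \<le> m \<and> int m < v iM" using h[of m] by (simp add: S_def)
      also have "\<dots> \<longleftrightarrow> m \<in> {1..<nat (v iM)}" by (simp add: zless_nat_eq_int_zless)
      finally show "m \<in> S iM \<longleftrightarrow> m \<in> {1..<nat (v iM)}" .
    qed
  qed
  have cardSiM: "card (S iM) + 1 = nat (v iM)" using SiM viM by simp
  have Sbound: "real (card (S j)) * a j < M" if "j < n" for j
  proof (cases "S j = {}")
    case True then show ?thesis using Mpos by simp
  next
    case False
    have c: "Max (S j) \<in> S j" using Max_in[OF Sfin[OF that] False] .
    have "S j \<subseteq> {1..Max (S j)}"
    proof
      fix x assume x: "x \<in> S j"
      have "x \<le> Max (S j)" by (rule Max_ge[OF Sfin[OF that] x])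
      moreover have "1 \<le> x" using x by (simp add: S_def)
      ultimately show "x \<in> {1..Max (S j)}" by simp
    qed
    then have "card (S j) \<le> Max (S j)" using card_mono[of "{1..Max (S j)}" "S j"] by simp
    then have "real (card (S j)) * a j \<le> real (Max (S j)) * a j"
      using apos that by (intro mult_right_mono) auto
    also have "\<dots> < M" using c by (simp add: S_def)
    finally show ?thesis .
  qed
  define w where "w = (\<lambda>j. if j < n then card (S j) + (if j = iM then 1 else 0) else 0)"
  have wiM: "w iM = nat (v iM)" using cardSiM iM by (simp add: w_def)
  have wsum: "(\<Sum>j<n. w j) = k"
  proof -
    have "(\<Sum>j<n. w j) = (\<Sum>j<n. card (S j) + (if j = iM then 1 else 0))"
      by (rule sum.cong) (auto simp: w_def)
    also have "\<dots> = (k - 1) + 1" using sumS iM by (simp add: sum.distrib)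
    finally show ?thesis using assms(5) by simp
  qed
  have wt: "w \<in> tuples n k" using wsum by (simp add: tuples_def w_def)
  have key: "w' = w" if wt': "w' \<in> tuples n k" and le: "\<forall>j<n. a j * real (w' j) \<le> M" for w'
  proof -
    have pw: "w' j \<le> w j" if "j < n" for j
    proof (cases "j = iM")
      case True
      have "a iM * real (w' iM) \<le> a iM * of_int (v iM)" using le iM unfolding M_def by simp
      then have "real (w' iM) \<le> of_int (v iM)" using aiM by simp
      then have "int (w' iM) \<le> v iM" by (metis of_int_le_iff of_int_of_nat_eq)
      then show ?thesis using True wiM by simp
    next
      case False
      have "a j * real (w' j) \<noteq> M" using strict[OF that False, of "int (w' j)"] by simp
      then have lt: "real (w' j) * a j < M" using le that by (simp add: mult.commute order_less_le)
      have "{1..w' j} \<subseteq> S j"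
      proof
        fix m assume "m \<in> {1..w' j}"
        then have "real m * a j \<le> real (w' j) * a j" using apos that by (intro mult_right_mono) auto
        then show "m \<in> S j" using lt \<open>m \<in> {1..w' j}\<close> by (simp add: S_def)
      qed
      then have "w' j \<le> card (S j)" by (rule le_card_aux[OF Sfin[OF that]])
      then show ?thesis using that by (simp add: w_def)
    qed
    show ?thesis
    proof (rule ccontr)
      assume "w' \<noteq> w"
      then obtain j where j: "w' j \<noteq> w j" by blast
      have "j < n"
      proof (rule ccontr)
        assume "\<not> j < n"
        then have "w' j = 0" "w j = 0" using wt' by (auto simp: tuples_def w_def)
        then show False using j by simp
      qed
      then have "w' j < w j" using pw j by (simp add: order_less_le)
      then have "(\<Sum>j<n. w' j) < (\<Sum>j<n. w j)"
        using pw \<open>j < n\<close> by (intro sum_strict_mono_ex1) auto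
      then show False using wsum wt' by (simp add: tuples_def)
    qed
  qed
  have maxw: "maxval n a w \<le> M"
    unfolding maxval_def
  proof (rule Max.boundedI)
    show "(\<lambda>i. a i * real (w i)) ` {..<n} \<noteq> {}" using iM by auto
  next
    fix x assume "x \<in> (\<lambda>i. a i * real (w i)) ` {..<n}"
    then obtain j where j: "j < n" "x = a j * real (w j)" by auto
    show "x \<le> M"
    proof (cases "j = iM")
      case True then show ?thesis using j wiM viM by (simp add: M_def)
    next
      case False then show ?thesis using j Sbound[OF j(1)] by (simp add: w_def mult.commute)
    qed
  qed simp
  have ge: "a j * real (w' j) \<le> maxval n a w'" if "j < n" for j w'
    unfolding maxval_def using that by (intro Max_ge) auto
  have G: "Gamma n a k = w"
    unfolding Gamma_def
  proof (rule the_equality)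
    show "w \<in> tuples n k \<and> (\<forall>w'\<in>tuples n k. maxval n a w \<le> maxval n a w')"
    proof (intro conjI ballI wt)
      fix w' assume h: "w' \<in> tuples n k"
      show "maxval n a w \<le> maxval n a w'"
      proof (rule ccontr)
        assume nt: "\<not> ?thesis"
        have "\<forall>j<n. a j * real (w' j) \<le> M"
        proof (intro allI impI)
          fix j assume "j < n"
          have "a j * real (w' j) \<le> maxval n a w'" by (rule ge[OF \<open>j < n\<close>])
          then show "a j * real (w' j) \<le> M" using nt maxw by linarith
        qed
        then have "w' = w" using key h by blast
        then show False using nt by simp
      qed
    qed
  next
    fix w'' assume h: "w'' \<in> tuples n k \<and> (\<forall>w'\<in>tuples n k. maxval n a w'' \<le> maxval n a w')"
    then have "maxval n a w'' \<le> maxval n a w" using wt by blast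
    then have mm: "maxval n a w'' \<le> M" using maxw by linarith
    have "\<forall>j<n. a j * real (w'' j) \<le> M"
    proof (intro allI impI)
      fix j assume "j < n"
      have "a j * real (w'' j) \<le> maxval n a w''" by (rule ge[OF \<open>j < n\<close>])
      then show "a j * real (w'' j) \<le> M" using mm by linarith
    qed
    then show "w'' = w" using key h by blast
  qed
  show ?thesis
  proof (intro allI impI)
    fix j assume j: "j < n"
    show "v j \<le> int (Gamma n a k j)"
    proof (cases "j = iM")
      case True then show ?thesis using G wiM viM by simp
    next
      case False
      show ?thesis
      proof (cases "v j \<le> 0")
        case True then show ?thesis by simp
      next
        case vp: False
        have lt: "a j * of_int (v j) < M" using iMmax j strict[OF j False] unfolding M_def
          by (meson order_less_le)
        have "{1..nat (v j)} \<subseteq> S j"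
        proof
          fix m assume m: "m \<in> {1..nat (v j)}"
          then have "real m \<le> of_int (v j)" using vp by auto
          then have "real m * a j \<le> of_int (v j) * a j" using apos j by (intro mult_right_mono) auto
          then show "m \<in> S j" using lt m by (simp add: S_def mult.commute)
        qed
        then have "nat (v j) \<le> card (S j)" by (rule le_card_aux[OF Sfin[OF j]])
        then show ?thesis using G j False vp by (simp add: w_def)
      qed
    qed
  qed
qed

end
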